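(* Let $n\ge 1$, $c\ge 0$ and $0\le k\le c$ be integers. There is a norm-preserving bijection between Gelfand–Tsetlin patterns with $n$ rows, parts in $\{0,1,\ldots,c\}$ and $a_{n,n}=k$, and strict plane partitions with parts in $\{1,2,\ldots,n\}$, at most $c$ columns and exactly $k$ parts equal to $n$. Under this bijection $(a_{1,n},a_{1,n-1},\ldots,a_{1,1})$ is the shape of the corresponding strict plane partition.
   Context: A Gelfand–Tsetlin pattern with $n$ rows and parts in $\{0,\ldots,c\}$ is an array of integers $(a_{i,j})_{1\le i\le n,\ i\le j\le n}$ with $0\le a_{i,j}\le c$ such that, setting $a_{i,i-1}=0$ and $a_{i,n+1}=c$, one has $a_{i,j}\le a_{i-1,j}\le a_{i,j+1}$ for all $2\le i\le n$ and $i-1\le j\le n$ (row $n$ consists of the single entry $a_{n,n}$ and is drawn on top; row $1$ has $n$ entries). Its norm is $\sum_{1\le i\le j\le n}a_{i,j}$. A strict plane partition of shape $\lambda=(\lambda_1\ge\lambda_2\ge\cdots\ge 0)$ is an array of non-negative integers $(\pi_{i,j})_{1\le j\le\lambda_i}$ with weakly decreasing rows and strictly decreasing columns; its norm is the sum of its entries; "at most $c$ columns" means $\lambda_1\le c$. *)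

theory Defs
  imports Main
begin

text \<open>Gelfand-Tsetlin patterns are functions a :: nat => nat => nat, where a i j is the
entry a_{i,j} for 1 <= i <= j <= n; entries outside this range are required to be 0
(canonical representation).\<close>

definition gt_ext :: "nat \<Rightarrow> nat \<Rightarrow> (nat \<Rightarrow> nat \<Rightarrow> nat) \<Rightarrow> nat \<Rightarrow> nat \<Rightarrow> nat" where
  "gt_ext n c a i j = (if j = i - 1 then 0 else if j = n + 1 then c else a i j)"

definition gt_pattern :: "nat \<Rightarrow> nat \<Rightarrow> (nat \<Rightarrow> nat \<Rightarrow> nat) \<Rightarrow> bool" where
  "gt_pattern n c a \<longleftrightarrow>
     (\<forall>i j. \<not> (1 \<le> i \<and> i \<le> j \<and> j \<le> n) \<longrightarrow> a i j = 0) \<and>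
     (\<forall>i j. 1 \<le> i \<and> i \<le> j \<and> j \<le> n \<longrightarrow> a i j \<le> c) \<and>
     (\<forall>i j. 2 \<le> i \<and> i \<le> n \<and> i - 1 \<le> j \<and> j \<le> n \<longrightarrow>
        gt_ext n c a i j \<le> a (i - 1) j \<and> a (i - 1) j \<le> gt_ext n c a i (j + 1))"

definition gt_norm :: "nat \<Rightarrow> (nat \<Rightarrow> nat \<Rightarrow> nat) \<Rightarrow> nat" where
  "gt_norm n a = (\<Sum>i=1..n. \<Sum>j=i..n. a i j)"

text \<open>Strict plane partitions: a pair (lambda, pi) where lambda i (i >= 1) is the length of
row i (lambda 0 = 0, weakly decreasing, eventually 0) and pi i j is the entry in row i,
column j for 1 <= j <= lambda i; pi is 0 outside the cells (canonical representation).\<close>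

definition spp_cells :: "(nat \<Rightarrow> nat) \<Rightarrow> (nat \<times> nat) set" where
  "spp_cells lam = {(i, j). 1 \<le> i \<and> 1 \<le> j \<and> j \<le> lam i}"

definition is_partition :: "(nat \<Rightarrow> nat) \<Rightarrow> bool" where
  "is_partition lam \<longleftrightarrow> lam 0 = 0 \<and> (\<forall>i\<ge>1. lam (i + 1) \<le> lam i) \<and>
     (\<exists>N. \<forall>i>N. lam i = 0)"

definition strict_plane_partition :: "(nat \<Rightarrow> nat) \<times> (nat \<Rightarrow> nat \<Rightarrow> nat) \<Rightarrow> bool" where
  "strict_plane_partition P \<longleftrightarrow> (case P of (lam, p) \<Rightarrow>
     is_partition lam \<and>
     (\<forall>i j. (i, j) \<notin> spp_cells lam \<longrightarrow> p i j = 0) \<and>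
     (\<forall>i j. (i, j) \<in> spp_cells lam \<and> (i, j + 1) \<in> spp_cells lam \<longrightarrow> p i (j + 1) \<le> p i j) \<and>
     (\<forall>i j. (i, j) \<in> spp_cells lam \<and> (i + 1, j) \<in> spp_cells lam \<longrightarrow> p (i + 1) j < p i j))"

definition spp_norm :: "(nat \<Rightarrow> nat) \<times> (nat \<Rightarrow> nat \<Rightarrow> nat) \<Rightarrow> nat" where
  "spp_norm P = (case P of (lam, p) \<Rightarrow> \<Sum>(i, j)\<in>spp_cells lam. p i j)"

definition GT_set :: "nat \<Rightarrow> nat \<Rightarrow> nat \<Rightarrow> (nat \<Rightarrow> nat \<Rightarrow> nat) set" where
  "GT_set n c k = {a. gt_pattern n c a \<and> a n n = k}"

definition SPP_set :: "nat \<Rightarrow> nat \<Rightarrow> nat \<Rightarrow> ((nat \<Rightarrow> nat) \<times> (nat \<Rightarrow> nat \<Rightarrow> nat)) set" where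
  "SPP_set n c k = {(lam, p). strict_plane_partition (lam, p) \<and>
      (\<forall>(i, j)\<in>spp_cells lam. 1 \<le> p i j \<and> p i j \<le> n) \<and>
      lam 1 \<le> c \<and>
      card {(i, j)\<in>spp_cells lam. p i j = n} = k}"

end

theory Submission
  imports Defs
begin

lemma downclosed_mem:
  assumes "S \<subseteq> {1..(N::nat)}" and "\<And>x y. x \<in> S \<Longrightarrow> 1 \<le> y \<Longrightarrow> y \<le> x \<Longrightarrow> y \<in> S"
  shows "x \<in> S \<longleftrightarrow> (1 \<le> x \<and> x \<le> card S)"
proof (cases "S = {}")
  case True then show ?thesis by simp
next
  case False
  have fin: "finite S" using assms(1) finite_subset by blast
  define M where "M = Max S"
  have M: "M \<in> S" using Max_in[OF fin False] M_def by simp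
  have eq: "S = {1..M}"
  proof
    show "S \<subseteq> {1..M}" using assms(1) Max_ge[OF fin] M_def by fastforce
    show "{1..M} \<subseteq> S" using assms(2)[OF M] by auto
  qed
  then have "card S = M" by simp
  then show ?thesis using eq by simp
qed

lemma galois:
  fixes h :: "nat \<Rightarrow> nat"
  assumes "\<And>x y. 1 \<le> x \<Longrightarrow> x \<le> y \<Longrightarrow> y \<le> N \<Longrightarrow> h y \<le> h x" and "1 \<le> x" "x \<le> N"
  shows "(m \<le> h x) \<longleftrightarrow> (x \<le> card {y\<in>{1..N}. m \<le> h y})"
proof -
  let ?S = "{y\<in>{1..N}. m \<le> h y}"
  have "x \<in> ?S \<longleftrightarrow> (1 \<le> x \<and> x \<le> card ?S)"
    apply (rule downclosed_mem[where N=N])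
     apply auto
    by (metis One_nat_def assms(1) le_trans)
  then show ?thesis using assms(2,3) by auto
qed

lemma card_filter_sum: "finite M \<Longrightarrow> card {m\<in>M. P m} = (\<Sum>m\<in>M. if P m then 1 else (0::nat))"
  using sum.inter_filter[of M "\<lambda>_. (1::nat)" P] by simp

lemma count_sum:
  fixes g :: "nat \<Rightarrow> nat"
  assumes fin: "finite M" and b: "\<forall>m\<in>M. g m \<le> L"
  shows "(\<Sum>j\<in>{1..L}. card {m\<in>M. j \<le> g m}) = (\<Sum>m\<in>M. g m)"
proof -
  have "(\<Sum>j\<in>{1..L}. card {m\<in>M. j \<le> g m}) = (\<Sum>j\<in>{1..L}. \<Sum>m\<in>M. if j \<le> g m then 1 else 0)"
    using card_filter_sum[OF fin] by simp
  also have "\<dots> = (\<Sum>m\<in>M. \<Sum>j\<in>{1..L}. if j \<le> g m then 1 else 0)"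
    by (rule sum.swap)
  also have "\<dots> = (\<Sum>m\<in>M. card {j\<in>{1..L}. j \<le> g m})"
    using card_filter_sum[of "{1..L}"] by simp
  also have "\<dots> = (\<Sum>m\<in>M. g m)"
  proof (rule sum.cong)
    fix m assume "m \<in> M"
    then have "{j\<in>{1..L}. j \<le> g m} = {1..g m}" using b by auto
    then show "card {j\<in>{1..L}. j \<le> g m} = g m" by simp
  qed simp
  finally show ?thesis .
qed

section \<open>GT patterns\<close>

lemma gt_zero: "gt_pattern n c a \<Longrightarrow> \<not> (1 \<le> i \<and> i \<le> j \<and> j \<le> n) \<Longrightarrow> a i j = 0"
  by (simp add: gt_pattern_def)

lemma gt_le_c: "gt_pattern n c a \<Longrightarrow> a i j \<le> c"
  unfolding gt_pattern_def by (metis zero_le)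

lemma gt_inter: "gt_pattern n c a \<Longrightarrow> 2 \<le> i \<Longrightarrow> i \<le> n \<Longrightarrow> i - 1 \<le> j \<Longrightarrow> j \<le> n \<Longrightarrow>
   gt_ext n c a i j \<le> a (i - 1) j \<and> a (i - 1) j \<le> gt_ext n c a i (j + 1)"
  unfolding gt_pattern_def by blast

lemma gt_A: assumes g: "gt_pattern n c a" and m: "1 \<le> m" shows "a (Suc m) J \<le> a m J"
proof (cases "Suc m \<le> J \<and> J \<le> n")
  case False then have "a (Suc m) J = 0" using gt_zero[OF g] by auto
  then show ?thesis by simp
next
  case True
  then have "gt_ext n c a (Suc m) J \<le> a (Suc m - 1) J" using gt_inter[OF g, of "Suc m" J] m by auto
  then show ?thesis using True by (simp add: gt_ext_def)
qed

lemma gt_B: assumes g: "gt_pattern n c a" and m: "1 \<le> m" and J: "J < n"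
  shows "a m J \<le> a (Suc m) (Suc J)"
proof (cases "m \<le> J")
  case False then have "a m J = 0" using gt_zero[OF g] by auto
  then show ?thesis by simp
next
  case True
  then have "a (Suc m - 1) J \<le> gt_ext n c a (Suc m) (J + 1)" using gt_inter[OF g, of "Suc m" J] m J by auto
  then show ?thesis using True J by (simp add: gt_ext_def)
qed

lemma gt_anti: assumes g: "gt_pattern n c a" and "1 \<le> x" "x \<le> y" shows "a y J \<le> a x J"
  using assms(3)
proof (induction y rule: dec_induct)
  case base then show ?case by simp
next
  case (step y)
  then show ?case using gt_A[OF g, of y J] assms(2) by simp
qed

lemma gt_row1: assumes g: "gt_pattern n c a" and "J < n" shows "a 1 J \<le> a 1 (Suc J)"
  using gt_B[OF g, of 1 J] gt_A[OF g, of 1 "Suc J"] assms(2) by simp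

lemma gt_intro:
  assumes z: "\<forall>i j. \<not> (1 \<le> i \<and> i \<le> j \<and> j \<le> n) \<longrightarrow> a i j = 0"
    and c: "\<forall>i j. a i j \<le> c"
    and A: "\<forall>m J. 1 \<le> m \<longrightarrow> a (Suc m) J \<le> a m J"
    and B: "\<forall>m J. 1 \<le> m \<longrightarrow> J < n \<longrightarrow> a m J \<le> a (Suc m) (Suc J)"
  shows "gt_pattern n c a"
  unfolding gt_pattern_def
proof (intro conjI allI impI)
  fix i j assume "\<not> (1 \<le> i \<and> i \<le> j \<and> j \<le> n)" then show "a i j = 0" using z by blast
next
  fix i j show "a i j \<le> c" using c by blast
next
  fix i j assume h: "2 \<le> i \<and> i \<le> n \<and> i - 1 \<le> j \<and> j \<le> n"
  define m where "m = i - 1"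
  have m: "i = Suc m" "1 \<le> m" using h m_def by auto
  show "gt_ext n c a i j \<le> a (i - 1) j"
    using A m h by (auto simp: gt_ext_def)
  show "a (i - 1) j \<le> gt_ext n c a i (j + 1)"
  proof (cases "j = n")
    case True then show ?thesis using c h by (auto simp: gt_ext_def)
  next
    case False then show ?thesis using B m h by (auto simp: gt_ext_def)
  qed
qed

definition lamF :: "nat \<Rightarrow> (nat \<Rightarrow> nat \<Rightarrow> nat) \<Rightarrow> nat \<Rightarrow> nat" where
  "lamF n a i = (if 1 \<le> i \<and> i \<le> n then a 1 (n + 1 - i) else 0)"

definition pF :: "nat \<Rightarrow> (nat \<Rightarrow> nat \<Rightarrow> nat) \<Rightarrow> nat \<Rightarrow> nat \<Rightarrow> nat" where
  "pF n a i j = (if (i, j) \<in> spp_cells (lamF n a) then card {m\<in>{1..n}. j \<le> a m (n + 1 - i)} else 0)"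

definition FF :: "nat \<Rightarrow> (nat \<Rightarrow> nat \<Rightarrow> nat) \<Rightarrow> (nat \<Rightarrow> nat) \<times> (nat \<Rightarrow> nat \<Rightarrow> nat)" where
  "FF n a = (lamF n a, pF n a)"

definition GG :: "nat \<Rightarrow> (nat \<Rightarrow> nat) \<times> (nat \<Rightarrow> nat \<Rightarrow> nat) \<Rightarrow> nat \<Rightarrow> nat \<Rightarrow> nat" where
  "GG n P = (case P of (lam, p) \<Rightarrow> (\<lambda>m J. if 1 \<le> m \<and> m \<le> J \<and> J \<le> n
      then card {t\<in>{1..lam (n + 1 - J)}. m \<le> p (n + 1 - J) t} else 0))"

lemma cells_lamF: "(i, j) \<in> spp_cells (lamF n a) \<longleftrightarrow> 1 \<le> i \<and> i \<le> n \<and> 1 \<le> j \<and> j \<le> a 1 (n + 1 - i)"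
  by (auto simp: spp_cells_def lamF_def)

lemma gal_gt: assumes g: "gt_pattern n c a" and "1 \<le> m" "m \<le> n"
  shows "(j \<le> a m J) \<longleftrightarrow> (m \<le> card {m'\<in>{1..n}. j \<le> a m' J})"
  using galois[of n "\<lambda>m'. a m' J" m j] gt_anti[OF g] assms(2,3) by blast

lemma card_le_n: "card {m\<in>{1..n::nat}. P m} \<le> n"
proof -
  have "card {m\<in>{1..n::nat}. P m} \<le> card {1..n}" by (rule card_mono) auto
  then show ?thesis by simp
qed


lemma pF_cell: "(i, j) \<in> spp_cells (lamF n a) \<Longrightarrow> pF n a i j = card {m\<in>{1..n}. j \<le> a m (n + 1 - i)}"
  by (simp add: pF_def)

lemma F_spp:
  assumes g: "gt_pattern n c a" and n: "1 \<le> n"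
  shows "FF n a \<in> SPP_set n c (a n n)"
proof -
  let ?lam = "lamF n a" and ?p = "pF n a"
  have part: "is_partition ?lam"
    unfolding is_partition_def
  proof (intro conjI allI impI)
    show "?lam 0 = 0" by (simp add: lamF_def)
  next
    fix i :: nat assume i: "1 \<le> i"
    show "?lam (i + 1) \<le> ?lam i"
    proof (cases "i + 1 \<le> n")
      case True
      then have "a 1 (n - i) \<le> a 1 (Suc (n - i))" using gt_row1[OF g, of "n - i"] i by simp
      moreover have "Suc (n - i) = n + 1 - i" "n + 1 - (i + 1) = n - i" using True by auto
      ultimately show ?thesis using True i by (simp add: lamF_def)
    next
      case False then show ?thesis by (simp add: lamF_def)
    qed
  next
    show "\<exists>N. \<forall>i>N. ?lam i = 0" by (rule exI[of _ n]) (simp add: lamF_def)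
  qed
  have zero: "\<forall>i j. (i, j) \<notin> spp_cells ?lam \<longrightarrow> ?p i j = 0" by (simp add: pF_def)
  have row: "\<forall>i j. (i, j) \<in> spp_cells ?lam \<and> (i, j + 1) \<in> spp_cells ?lam \<longrightarrow> ?p i (j + 1) \<le> ?p i j"
  proof (intro allI impI)
    fix i j assume h: "(i, j) \<in> spp_cells ?lam \<and> (i, j + 1) \<in> spp_cells ?lam"
    have "card {m\<in>{1..n}. j + 1 \<le> a m (n + 1 - i)} \<le> card {m\<in>{1..n}. j \<le> a m (n + 1 - i)}"
      by (rule card_mono) auto
    then show "?p i (j + 1) \<le> ?p i j" using h by (simp add: pF_cell)
  qed
  have col: "\<forall>i j. (i, j) \<in> spp_cells ?lam \<and> (i + 1, j) \<in> spp_cells ?lam \<longrightarrow> ?p (i + 1) j < ?p i j"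
  proof (intro allI impI)
    fix i j assume h: "(i, j) \<in> spp_cells ?lam \<and> (i + 1, j) \<in> spp_cells ?lam"
    then have hi: "1 \<le> i" "i + 1 \<le> n" "1 \<le> j" "j \<le> a 1 (n + 1 - (i + 1))" by (auto simp: cells_lamF)
    define J' where "J' = n + 1 - (i + 1)"
    have J: "n + 1 - i = Suc J'" "1 \<le> J'" "J' < n" using hi J'_def by auto
    define Q where "Q = card {m\<in>{1..n}. j \<le> a m J'}"
    have pQ: "?p (i + 1) j = Q" using h by (simp add: pF_cell Q_def J'_def)
    have pP: "?p i j = card {m\<in>{1..n}. j \<le> a m (Suc J')}" using h J by (simp add: pF_cell)
    have Q1: "1 \<le> Q" using gal_gt[OF g, of 1 j J'] n hi J'_def Q_def by simp
    have Qn: "Q \<le> n" unfolding Q_def by (rule card_le_n)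
    have jQ: "j \<le> a Q J'" using gal_gt[OF g, of Q j J'] Q1 Qn Q_def by simp
    then have "a Q J' \<noteq> 0" using hi by auto
    then have "Q \<le> J'" using gt_zero[OF g, of Q J'] by auto
    then have Qlt: "Suc Q \<le> n" using J by simp
    have "a Q J' \<le> a (Suc Q) (Suc J')" using gt_B[OF g, of Q J'] Q1 J by simp
    then have "j \<le> a (Suc Q) (Suc J')" using jQ by simp
    then have "Suc Q \<le> card {m\<in>{1..n}. j \<le> a m (Suc J')}"
      using gal_gt[OF g, of "Suc Q" j "Suc J'"] Qlt by simp
    then show "?p (i + 1) j < ?p i j" using pQ pP by simp
  qed
  have ent: "\<forall>(i, j)\<in>spp_cells ?lam. 1 \<le> ?p i j \<and> ?p i j \<le> n"
  proof (intro ballI, clarify)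
    fix i j assume h: "(i, j) \<in> spp_cells ?lam"
    then have "j \<le> a 1 (n + 1 - i)" by (simp add: cells_lamF)
    then have "1 \<le> card {m\<in>{1..n}. j \<le> a m (n + 1 - i)}" using gal_gt[OF g, of 1 j "n + 1 - i"] n by simp
    then show "1 \<le> ?p i j \<and> ?p i j \<le> n" using h card_le_n by (simp add: pF_cell)
  qed
  have l1: "?lam 1 \<le> c" using gt_le_c[OF g] by (simp add: lamF_def)
  have cnt: "{(i, j)\<in>spp_cells ?lam. ?p i j = n} = (\<lambda>j. (1, j)) ` {1..a n n}"
  proof
    show "{(i, j)\<in>spp_cells ?lam. ?p i j = n} \<subseteq> (\<lambda>j. (1, j)) ` {1..a n n}"
    proof clarify
      fix i j assume h: "(i, j) \<in> spp_cells ?lam" "?p i j = n"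
      then have hi: "1 \<le> i" "i \<le> n" "1 \<le> j" by (auto simp: cells_lamF)
      have "n \<le> card {m\<in>{1..n}. j \<le> a m (n + 1 - i)}" using h by (simp add: pF_cell)
      then have ja: "j \<le> a n (n + 1 - i)" using gal_gt[OF g, of n j "n + 1 - i"] n by simp
      then have "a n (n + 1 - i) \<noteq> 0" using hi by auto
      then have "n \<le> n + 1 - i" using gt_zero[OF g, of n "n + 1 - i"] by auto
      then have "i = 1" using hi by simp
      then show "(i, j) \<in> (\<lambda>j. (1, j)) ` {1..a n n}" using ja hi by simp
    qed
    show "(\<lambda>j. (1, j)) ` {1..a n n} \<subseteq> {(i, j)\<in>spp_cells ?lam. ?p i j = n}"
    proof clarify
      fix j assume j: "j \<in> {1..a n n}"
      have "a n n \<le> a 1 n" using gt_anti[OF g, of 1 n n] n by simp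
      then have cell: "(1, j) \<in> spp_cells ?lam" using j n by (simp add: cells_lamF)
      have "n \<le> card {m\<in>{1..n}. j \<le> a m n}" using gal_gt[OF g, of n j n] n j by simp
      then have "?p 1 j = n" using cell card_le_n[of n "\<lambda>m. j \<le> a m n"] by (simp add: pF_cell)
      then show "(1, j) \<in> spp_cells ?lam \<and> ?p 1 j = n" using cell by simp
    qed
  qed
  have "card {(i, j)\<in>spp_cells ?lam. ?p i j = n} = a n n"
    unfolding cnt by (subst card_image) (auto simp: inj_on_def)
  then show ?thesis
    using part zero row col ent l1
    unfolding SPP_set_def FF_def strict_plane_partition_def by simp
qed


lemma F_norm:
  assumes g: "gt_pattern n c a"
  shows "spp_norm (FF n a) = gt_norm n a"
proof -
  have cells: "spp_cells (lamF n a) = Sigma {1..n} (\<lambda>i. {1..a 1 (n + 1 - i)})"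
    by (auto simp: cells_lamF)
  have "spp_norm (FF n a) = (\<Sum>(i, j)\<in>Sigma {1..n} (\<lambda>i. {1..a 1 (n + 1 - i)}). pF n a i j)"
    by (simp add: spp_norm_def FF_def cells)
  also have "\<dots> = (\<Sum>i\<in>{1..n}. \<Sum>j\<in>{1..a 1 (n + 1 - i)}. pF n a i j)"
    by (rule sum.Sigma[symmetric]) auto
  also have "\<dots> = (\<Sum>i\<in>{1..n}. \<Sum>j\<in>{1..a 1 (n + 1 - i)}. card {m\<in>{1..n}. j \<le> a m (n + 1 - i)})"
    by (intro sum.cong refl) (simp add: pF_cell cells_lamF)
  also have "\<dots> = (\<Sum>i\<in>{1..n}. \<Sum>m\<in>{1..n}. a m (n + 1 - i))"
    by (intro sum.cong refl count_sum) (auto intro: gt_anti[OF g])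
  also have "\<dots> = (\<Sum>J\<in>{1..n}. \<Sum>m\<in>{1..n}. a m J)"
    using sum.atLeastAtMost_rev[of "\<lambda>J. \<Sum>m\<in>{1..n}. a m J" 1 n] by simp
  also have "\<dots> = (\<Sum>m\<in>{1..n}. \<Sum>J\<in>{1..n}. a m J)"
    by (rule sum.swap)
  also have "\<dots> = (\<Sum>m\<in>{1..n}. \<Sum>J\<in>{m..n}. a m J)"
  proof (rule sum.cong[OF refl])
    fix m assume mm: "m \<in> {1..n}"
    show "(\<Sum>J\<in>{1..n}. a m J) = (\<Sum>J\<in>{m..n}. a m J)"
      by (rule sum.mono_neutral_right) (use mm in \<open>auto intro: gt_zero[OF g]\<close>)
  qed
  finally show ?thesis by (simp add: gt_norm_def)
qed


section \<open>Strict plane partitions\<close>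

lemma spp_part: "strict_plane_partition (lam, p) \<Longrightarrow> is_partition lam"
  by (simp add: strict_plane_partition_def)
lemma spp_zero: "strict_plane_partition (lam, p) \<Longrightarrow> (i, j) \<notin> spp_cells lam \<Longrightarrow> p i j = 0"
  by (simp add: strict_plane_partition_def)
lemma spp_row: "strict_plane_partition (lam, p) \<Longrightarrow> (i, j) \<in> spp_cells lam \<Longrightarrow> (i, j + 1) \<in> spp_cells lam \<Longrightarrow> p i (j + 1) \<le> p i j"
  by (simp add: strict_plane_partition_def)
lemma spp_col: "strict_plane_partition (lam, p) \<Longrightarrow> (i, j) \<in> spp_cells lam \<Longrightarrow> (i + 1, j) \<in> spp_cells lam \<Longrightarrow> p (i + 1) j < p i j"
  by (simp add: strict_plane_partition_def)

lemma lam_anti: assumes "is_partition lam" "1 \<le> x" "x \<le> y" shows "lam y \<le> lam x"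
  using assms(3)
proof (induction y rule: dec_induct)
  case base then show ?case by simp
next
  case (step y)
  then show ?case using assms(1,2) unfolding is_partition_def by (metis Suc_eq_plus1 le_trans order_trans)
qed

lemma row_anti: assumes sp: "strict_plane_partition (lam, p)" and "1 \<le> i" "1 \<le> x" "x \<le> y" "y \<le> lam i"
  shows "p i y \<le> p i x"
  using assms(4,5)
proof (induction y rule: dec_induct)
  case base then show ?case by simp
next
  case (step y)
  have "(i, y) \<in> spp_cells lam" "(i, y + 1) \<in> spp_cells lam" using step assms(2,3) by (auto simp: spp_cells_def)
  then have "p i (Suc y) \<le> p i y" using spp_row[OF sp] by simp
  then show ?case using step by simp
qed

lemma col_bound:
  assumes sp: "strict_plane_partition (lam, p)" and ent: "\<forall>(i, j)\<in>spp_cells lam. 1 \<le> p i j \<and> p i j \<le> n"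
  shows "(i, j) \<in> spp_cells lam \<Longrightarrow> p i j + i \<le> n + 1"
proof (induction i arbitrary: j)
  case 0 then show ?case by (simp add: spp_cells_def)
next
  case (Suc i)
  show ?case
  proof (cases "i = 0")
    case True then show ?thesis using Suc.prems ent by auto
  next
    case False
    have "lam (Suc i) \<le> lam i" using lam_anti[OF spp_part[OF sp], of i "Suc i"] False by simp
    then have ci: "(i, j) \<in> spp_cells lam" using Suc.prems False by (auto simp: spp_cells_def)
    have "p (i + 1) j < p i j" using spp_col[OF sp ci] Suc.prems by simp
    then show ?thesis using Suc.IH[OF ci] by simp
  qed
qed

lemma lam_zero:
  assumes sp: "strict_plane_partition (lam, p)" and ent: "\<forall>(i, j)\<in>spp_cells lam. 1 \<le> p i j \<and> p i j \<le> n"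
    and "n < i"
  shows "lam i = 0"
proof (rule ccontr)
  assume "lam i \<noteq> 0"
  then have c: "(i, 1) \<in> spp_cells lam" using assms(3) by (auto simp: spp_cells_def)
  then have "p i 1 + i \<le> n + 1" by (rule col_bound[OF sp ent])
  moreover have "1 \<le> p i 1" using ent c by auto
  ultimately show False using assms(3) by simp
qed

lemma gal_spp: assumes sp: "strict_plane_partition (lam, p)" and "1 \<le> i" "1 \<le> t" "t \<le> lam i"
  shows "(m \<le> p i t) \<longleftrightarrow> (t \<le> card {t'\<in>{1..lam i}. m \<le> p i t'})"
  using galois[of "lam i" "p i" t m] row_anti[OF sp assms(2)] assms(3,4) by blast


lemma G_gt:
  assumes sp: "strict_plane_partition (lam, p)" and ent: "\<forall>(i, j)\<in>spp_cells lam. 1 \<le> p i j \<and> p i j \<le> n"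
    and l1: "lam 1 \<le> c" and n: "1 \<le> n"
  shows "gt_pattern n c (GG n (lam, p)) \<and> GG n (lam, p) n n = card {(i, j)\<in>spp_cells lam. p i j = n}"
proof
  let ?a = "GG n (lam, p)"
  have part: "is_partition lam" by (rule spp_part[OF sp])
  have aval: "?a m J = (if 1 \<le> m \<and> m \<le> J \<and> J \<le> n
      then card {t\<in>{1..lam (n + 1 - J)}. m \<le> p (n + 1 - J) t} else 0)" for m J
    by (simp add: GG_def)
  have cardle: "card {t\<in>{1..L}. P t} \<le> L" for L P
  proof -
    have "card {t\<in>{1..L::nat}. P t} \<le> card {1..L}" by (rule card_mono) auto
    then show ?thesis by simp
  qed
  show "gt_pattern n c ?a"
  proof (rule gt_intro)
    show "\<forall>i j. \<not> (1 \<le> i \<and> i \<le> j \<and> j \<le> n) \<longrightarrow> ?a i j = 0" by (simp add: aval)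
    show "\<forall>i j. ?a i j \<le> c"
    proof (intro allI)
      fix m J
      show "?a m J \<le> c"
      proof (cases "1 \<le> m \<and> m \<le> J \<and> J \<le> n")
        case True
        have "?a m J \<le> lam (n + 1 - J)" using cardle True unfolding aval by simp
        moreover have "lam (n + 1 - J) \<le> lam 1" using True by (intro lam_anti[OF part]) auto
        ultimately show ?thesis using l1 by simp
      next
        case False then show ?thesis by (auto simp: aval)
      qed
    qed
    show "\<forall>m J. 1 \<le> m \<longrightarrow> ?a (Suc m) J \<le> ?a m J"
    proof (intro allI impI)
      fix m J :: nat assume m: "1 \<le> m"
      show "?a (Suc m) J \<le> ?a m J"
      proof (cases "Suc m \<le> J \<and> J \<le> n")
        case True
        have "card {t\<in>{1..lam (n + 1 - J)}. Suc m \<le> p (n + 1 - J) t} \<le> card {t\<in>{1..lam (n + 1 - J)}. m \<le> p (n + 1 - J) t}"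
          by (rule card_mono) auto
        then show ?thesis using True m by (simp add: aval)
      next
        case False then show ?thesis by (auto simp: aval)
      qed
    qed
    show "\<forall>m J. 1 \<le> m \<longrightarrow> J < n \<longrightarrow> ?a m J \<le> ?a (Suc m) (Suc J)"
    proof (intro allI impI)
      fix m J :: nat assume m: "1 \<le> m" and J: "J < n"
      show "?a m J \<le> ?a (Suc m) (Suc J)"
      proof (cases "m \<le> J")
        case True
        define i where "i = n + 1 - J"
        have i: "n + 1 - Suc J = i - 1" "2 \<le> i" using J i_def by auto
        have "{t\<in>{1..lam i}. m \<le> p i t} \<subseteq> {t\<in>{1..lam (i - 1)}. Suc m \<le> p (i - 1) t}"
        proof
          fix t assume "t \<in> {t\<in>{1..lam i}. m \<le> p i t}"
          then have t: "1 \<le> t" "t \<le> lam i" "m \<le> p i t" by auto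
          have "lam i \<le> lam (i - 1)" using lam_anti[OF part, of "i - 1" i] i by simp
          then have c1: "(i - 1, t) \<in> spp_cells lam" and c2: "(i - 1 + 1, t) \<in> spp_cells lam"
            using t i by (auto simp: spp_cells_def)
          have "p (i - 1 + 1) t < p (i - 1) t" by (rule spp_col[OF sp c1 c2])
          then have "m < p (i - 1) t" using t i by simp
          then show "t \<in> {t\<in>{1..lam (i - 1)}. Suc m \<le> p (i - 1) t}" using t \<open>lam i \<le> lam (i - 1)\<close> by simp
        qed
        then have "card {t\<in>{1..lam i}. m \<le> p i t} \<le> card {t\<in>{1..lam (i - 1)}. Suc m \<le> p (i - 1) t}"
          by (rule card_mono[rotated]) auto
        then show ?thesis using True m J i by (simp add: aval i_def)
      next
        case False then show ?thesis by (auto simp: aval)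
      qed
    qed
  qed
  have eq: "{(i, j)\<in>spp_cells lam. p i j = n} = (\<lambda>t. (1, t)) ` {t\<in>{1..lam 1}. n \<le> p 1 t}"
  proof
    show "{(i, j)\<in>spp_cells lam. p i j = n} \<subseteq> (\<lambda>t. (1, t)) ` {t\<in>{1..lam 1}. n \<le> p 1 t}"
    proof
      fix x assume "x \<in> {(i, j)\<in>spp_cells lam. p i j = n}"
      then obtain i j where h: "x = (i, j)" "(i, j) \<in> spp_cells lam" "p i j = n" by blast
      then have "p i j + i \<le> n + 1" using col_bound[OF sp ent] by blast
      then have "i = 1" using h by (auto simp: spp_cells_def)
      then show "x \<in> (\<lambda>t. (1, t)) ` {t\<in>{1..lam 1}. n \<le> p 1 t}" using h by (auto simp: spp_cells_def)
    qed
    show "(\<lambda>t. (1, t)) ` {t\<in>{1..lam 1}. n \<le> p 1 t} \<subseteq> {(i, j)\<in>spp_cells lam. p i j = n}"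
    proof
      fix x :: "nat \<times> nat" assume "x \<in> (\<lambda>t. (1, t)) ` {t\<in>{1..lam 1}. n \<le> p 1 t}"
      then obtain t where t: "x = (1::nat, t)" "1 \<le> t" "t \<le> lam 1" "n \<le> p 1 t" by auto
      then have c: "(1, t) \<in> spp_cells lam" by (simp add: spp_cells_def)
      then have "p 1 t \<le> n" using ent by auto
      then show "x \<in> {(i, j)\<in>spp_cells lam. p i j = n}" using c t by simp
    qed
  qed
  have "card {(i, j)\<in>spp_cells lam. p i j = n} = card {t\<in>{1..lam 1}. n \<le> p 1 t}"
    unfolding eq by (subst card_image) (auto simp: inj_on_def)
  then show "?a n n = card {(i, j)\<in>spp_cells lam. p i j = n}" using n by (simp add: aval)
qed

lemma GF:
  assumes g: "gt_pattern n c a" and n: "1 \<le> n"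
  shows "GG n (FF n a) = a"
proof (intro ext)
  fix m J
  show "GG n (FF n a) m J = a m J"
  proof (cases "1 \<le> m \<and> m \<le> J \<and> J \<le> n")
    case True
    define i where "i = n + 1 - J"
    have iJ: "n + 1 - i = J" "1 \<le> i" "i \<le> n" using True i_def by auto
    have li: "lamF n a i = a 1 J" using iJ by (simp add: lamF_def)
    have am: "a m J \<le> a 1 J" using gt_anti[OF g, of 1 m J] True by simp
    have "{t\<in>{1..lamF n a i}. m \<le> pF n a i t} = {1..a m J}"
    proof (rule set_eqI)
      fix t
      show "t \<in> {t\<in>{1..lamF n a i}. m \<le> pF n a i t} \<longleftrightarrow> t \<in> {1..a m J}"
      proof (cases "1 \<le> t \<and> t \<le> a 1 J")
        case True2: True
        then have "(i, t) \<in> spp_cells (lamF n a)" using iJ by (simp add: cells_lamF)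
        then have "pF n a i t = card {m\<in>{1..n}. t \<le> a m J}" using iJ by (simp add: pF_cell)
        then have "m \<le> pF n a i t \<longleftrightarrow> t \<le> a m J" using gal_gt[OF g, of m t J] True by simp
        then show ?thesis using True2 li by auto
      next
        case False then show ?thesis using li am by auto
      qed
    qed
    then have "card {t\<in>{1..lamF n a (n + 1 - J)}. m \<le> pF n a (n + 1 - J) t} = a m J"
      unfolding i_def by simp
    then show ?thesis using True by (simp add: GG_def FF_def)
  next
    case False
    then show ?thesis using gt_zero[OF g, of m J] by (auto simp: GG_def FF_def)
  qed
qed


lemma FG:
  assumes sp: "strict_plane_partition (lam, p)" and ent: "\<forall>(i, j)\<in>spp_cells lam. 1 \<le> p i j \<and> p i j \<le> n"
    and n: "1 \<le> n"
  shows "FF n (GG n (lam, p)) = (lam, p)"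
proof -
  let ?a = "GG n (lam, p)"
  have part: "is_partition lam" by (rule spp_part[OF sp])
  have aval: "?a m J = (if 1 \<le> m \<and> m \<le> J \<and> J \<le> n
      then card {t\<in>{1..lam (n + 1 - J)}. m \<le> p (n + 1 - J) t} else 0)" for m J
    by (simp add: GG_def)
  have L: "lamF n ?a = lam"
  proof (rule ext)
    fix i
    show "lamF n ?a i = lam i"
    proof (cases "1 \<le> i \<and> i \<le> n")
      case True
      have e: "n + 1 - (n + 1 - i) = i" using True by simp
      have "{t\<in>{1..lam i}. 1 \<le> p i t} = {1..lam i}" using ent True by (auto simp: spp_cells_def)
      moreover have c1: "1 \<le> n + 1 - i" "n + 1 - i \<le> n" using True by auto
      ultimately have "?a 1 (n + 1 - i) = lam i" unfolding aval using c1 e by simp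
      then show ?thesis using True by (simp add: lamF_def)
    next
      case False
      then have "lam i = 0"
      proof (cases "i = 0")
        case True then show ?thesis using part by (simp add: is_partition_def)
      next
        case False2: False
        then show ?thesis using False lam_zero[OF sp ent, of i] by simp
      qed
      then show ?thesis using False by (auto simp: lamF_def)
    qed
  qed
  have P: "pF n ?a = p"
  proof (intro ext)
    fix i j
    show "pF n ?a i j = p i j"
    proof (cases "(i, j) \<in> spp_cells lam")
      case True
      then have ij: "1 \<le> i" "1 \<le> j" "j \<le> lam i" by (auto simp: spp_cells_def)
      have "i \<le> n" using lam_zero[OF sp ent, of i] ij by (cases "n < i") auto
      define J where "J = n + 1 - i"
      have iJ: "n + 1 - J = i" "J \<le> n" using ij \<open>i \<le> n\<close> J_def by auto
      have pb: "p i j \<le> J" using col_bound[OF sp ent True] J_def by simp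
      have "{m\<in>{1..n}. j \<le> ?a m J} = {1..p i j}"
      proof (rule set_eqI)
        fix m
        show "m \<in> {m\<in>{1..n}. j \<le> ?a m J} \<longleftrightarrow> m \<in> {1..p i j}"
        proof (cases "1 \<le> m \<and> m \<le> J")
          case True2: True
          have "j \<le> ?a m J \<longleftrightarrow> m \<le> p i j"
            using gal_spp[OF sp ij(1) ij(2) ij(3), of m] True2 iJ by (simp add: aval)
          then show ?thesis using True2 iJ by auto
        next
          case False
          then show ?thesis using pb ij by (auto simp: aval)
        qed
      qed
      then have "card {m\<in>{1..n}. j \<le> ?a m (n + 1 - i)} = p i j" using J_def by simp
      then show ?thesis using True L by (simp add: pF_def)
    next
      case False
      then show ?thesis using L spp_zero[OF sp False] by (simp add: pF_def)
    qed
  qed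
  show ?thesis using L P by (simp add: FF_def)
qed

theorem lemma2:
  fixes n c k :: nat
  assumes "n \<ge> 1" and "k \<le> c"
  shows "\<exists>f. bij_betw f (GT_set n c k) (SPP_set n c k) \<and>
           (\<forall>a\<in>GT_set n c k. spp_norm (f a) = gt_norm n a) \<and>
           (\<forall>a\<in>GT_set n c k. fst (f a) = (\<lambda>i. if 1 \<le> i \<and> i \<le> n then a 1 (n + 1 - i) else 0))"
proof (intro exI conjI)
  show "bij_betw (FF n) (GT_set n c k) (SPP_set n c k)"
  proof (rule bij_betw_byWitness[where f' = "GG n"])
    show "\<forall>a\<in>GT_set n c k. GG n (FF n a) = a"
      using GF assms(1) by (auto simp: GT_set_def)
    show "\<forall>a'\<in>SPP_set n c k. FF n (GG n a') = a'"
      using FG assms(1) by (auto simp: SPP_set_def)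
    show "FF n ` GT_set n c k \<subseteq> SPP_set n c k"
      using F_spp assms(1) by (auto simp: GT_set_def)
    show "GG n ` SPP_set n c k \<subseteq> GT_set n c k"
    proof
      fix a assume "a \<in> GG n ` SPP_set n c k"
      then obtain lam p where h: "a = GG n (lam, p)" "(lam, p) \<in> SPP_set n c k" by auto
      then show "a \<in> GT_set n c k"
        using G_gt[of lam p n c] assms(1) by (auto simp: SPP_set_def GT_set_def)
    qed
  qed
  show "\<forall>a\<in>GT_set n c k. spp_norm (FF n a) = gt_norm n a"
    using F_norm by (auto simp: GT_set_def)
  show "\<forall>a\<in>GT_set n c k. fst (FF n a) = (\<lambda>i. if 1 \<le> i \<and> i \<le> n then a 1 (n + 1 - i) else 0)"
    by (auto simp: FF_def lamF_def[abs_def])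
qed

end
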